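(* Let $G$ be a finite connected graph with maximal vertex degree $d$ and diameter $D$. For any sign $\sigma$ on $G$ such that $(G,\sigma)$ satisfies $CD^{\sigma}(K,\infty)$, we have \[ (D+1)\left\lceil\frac{D+1}{2}\right\rceil\geq\frac{1}{4d(2\lambda^{\sigma}-K)}, \] where $\lambda^\sigma$ is the first (smallest) nonzero eigenvalue of $\Delta^\sigma$. If $\lambda^\sigma$ is not simple or $(G,\sigma)$ is balanced, then moreover \[ D\left\lceil\frac{D}{2}\right\rceil\geq\frac{1}{4d(2\lambda^{\sigma}-K)}. \]
   Context: $G=(V,E)$ is a finite simple connected graph with degrees $d_x$; a sign is $\sigma:E\to\{\pm1\}$, $\sigma_{xy}=\sigma(\{x,y\})$; $(G,\sigma)$ is balanced if every cycle has sign product $+1$. Signed Laplacian $\Delta^{\sigma}f(x)=\frac{1}{d_x}\sum_{y\sim x}(\sigma_{xy}f(y)-f(x))$; $\Delta$ is the case $\sigma\equiv+1$; eigenvalues: $-\Delta^\sigma f=\lambda f$, $f\neq 0$. $\Gamma^{\sigma}(f,g)=\frac12\{\Delta(fg)-g\Delta^{\sigma}f-f\Delta^{\sigma}g\}$, $\Gamma_2^{\sigma}(f,g)=\frac12\{\Delta\Gamma^{\sigma}(f,g)-\Gamma^{\sigma}(g,\Delta^{\sigma}f)-\Gamma^{\sigma}(f,\Delta^{\sigma}g)\}$. $CD^{\sigma}(K,\infty)$ means $\Gamma_2^{\sigma}(f,f)(x)\ge K\Gamma^\sigma(f,f)(x)$ for all $f:V\to\mathbb{R}$, $x\in V$. $\lceil\cdot\rceil$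 is the ceiling. *)

theory Defs
  imports Complex_Main
begin

definition simple_graph :: "'a set \<Rightarrow> ('a \<Rightarrow> 'a \<Rightarrow> bool) \<Rightarrow> bool" where
  "simple_graph V E \<longleftrightarrow> finite V \<and> (\<forall>x y. E x y \<longrightarrow> x \<in> V \<and> y \<in> V \<and> E y x \<and> x \<noteq> y)"

definition nbrs :: "'a set \<Rightarrow> ('a \<Rightarrow> 'a \<Rightarrow> bool) \<Rightarrow> 'a \<Rightarrow> 'a set" where
  "nbrs V E x = {y \<in> V. E x y}"

definition deg :: "'a set \<Rightarrow> ('a \<Rightarrow> 'a \<Rightarrow> bool) \<Rightarrow> 'a \<Rightarrow> nat" where
  "deg V E x = card (nbrs V E x)"

definition max_deg :: "'a set \<Rightarrow> ('a \<Rightarrow> 'a \<Rightarrow> bool) \<Rightarrow> nat" where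
  "max_deg V E = Max (deg V E ` V)"

definition walk :: "'a set \<Rightarrow> ('a \<Rightarrow> 'a \<Rightarrow> bool) \<Rightarrow> 'a list \<Rightarrow> bool" where
  "walk V E xs \<longleftrightarrow> xs \<noteq> [] \<and> set xs \<subseteq> V \<and>
     (\<forall>i. Suc i < length xs \<longrightarrow> E (xs ! i) (xs ! Suc i))"

definition connected_graph :: "'a set \<Rightarrow> ('a \<Rightarrow> 'a \<Rightarrow> bool) \<Rightarrow> bool" where
  "connected_graph V E \<longleftrightarrow>
     (\<forall>x\<in>V. \<forall>y\<in>V. \<exists>xs. walk V E xs \<and> hd xs = x \<and> last xs = y)"

definition gdist :: "'a set \<Rightarrow> ('a \<Rightarrow> 'a \<Rightarrow> bool) \<Rightarrow> 'a \<Rightarrow> 'a \<Rightarrow> nat" where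
  "gdist V E x y = (LEAST n. \<exists>xs. walk V E xs \<and> hd xs = x \<and> last xs = y \<and> length xs = Suc n)"

definition diameter :: "'a set \<Rightarrow> ('a \<Rightarrow> 'a \<Rightarrow> bool) \<Rightarrow> nat" where
  "diameter V E = Max {gdist V E x y | x y. x \<in> V \<and> y \<in> V}"

definition is_sign :: "('a \<Rightarrow> 'a \<Rightarrow> bool) \<Rightarrow> ('a \<Rightarrow> 'a \<Rightarrow> real) \<Rightarrow> bool" where
  "is_sign E \<sigma> \<longleftrightarrow> (\<forall>x y. E x y \<longrightarrow> (\<sigma> x y = 1 \<or> \<sigma> x y = -1) \<and> \<sigma> x y = \<sigma> y x)"

definition is_cycle :: "'a set \<Rightarrow> ('a \<Rightarrow> 'a \<Rightarrow> bool) \<Rightarrow> 'a list \<Rightarrow> bool" where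
  "is_cycle V E cs \<longleftrightarrow> length cs \<ge> 3 \<and> distinct cs \<and> walk V E cs \<and> E (last cs) (hd cs)"

definition cycle_sign :: "('a \<Rightarrow> 'a \<Rightarrow> real) \<Rightarrow> 'a list \<Rightarrow> real" where
  "cycle_sign \<sigma> cs = (\<Prod>i<length cs. \<sigma> (cs ! i) (cs ! ((Suc i) mod length cs)))"

definition balanced :: "'a set \<Rightarrow> ('a \<Rightarrow> 'a \<Rightarrow> bool) \<Rightarrow> ('a \<Rightarrow> 'a \<Rightarrow> real) \<Rightarrow> bool" where
  "balanced V E \<sigma> \<longleftrightarrow> (\<forall>cs. is_cycle V E cs \<longrightarrow> cycle_sign \<sigma> cs = 1)"

definition slap :: "'a set \<Rightarrow> ('a \<Rightarrow> 'a \<Rightarrow> bool) \<Rightarrow> ('a \<Rightarrow> 'a \<Rightarrow> real) \<Rightarrow> ('a \<Rightarrow> real) \<Rightarrow> 'a \<Rightarrow> real" where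
  "slap V E \<sigma> f x = (1 / real (deg V E x)) * (\<Sum>y\<in>nbrs V E x. \<sigma> x y * f y - f x)"

definition lap :: "'a set \<Rightarrow> ('a \<Rightarrow> 'a \<Rightarrow> bool) \<Rightarrow> ('a \<Rightarrow> real) \<Rightarrow> 'a \<Rightarrow> real" where
  "lap V E f = slap V E (\<lambda>_ _. 1) f"

definition sGamma :: "'a set \<Rightarrow> ('a \<Rightarrow> 'a \<Rightarrow> bool) \<Rightarrow> ('a \<Rightarrow> 'a \<Rightarrow> real) \<Rightarrow> ('a \<Rightarrow> real) \<Rightarrow> ('a \<Rightarrow> real) \<Rightarrow> 'a \<Rightarrow> real" where
  "sGamma V E \<sigma> f g x = (1/2) * (lap V E (\<lambda>z. f z * g z) x - g x * slap V E \<sigma> f x - f x * slap V E \<sigma> g x)"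

definition sGamma2 :: "'a set \<Rightarrow> ('a \<Rightarrow> 'a \<Rightarrow> bool) \<Rightarrow> ('a \<Rightarrow> 'a \<Rightarrow> real) \<Rightarrow> ('a \<Rightarrow> real) \<Rightarrow> ('a \<Rightarrow> real) \<Rightarrow> 'a \<Rightarrow> real" where
  "sGamma2 V E \<sigma> f g x = (1/2) * (lap V E (sGamma V E \<sigma> f g) x
      - sGamma V E \<sigma> g (slap V E \<sigma> f) x - sGamma V E \<sigma> f (slap V E \<sigma> g) x)"

definition CD_inf :: "'a set \<Rightarrow> ('a \<Rightarrow> 'a \<Rightarrow> bool) \<Rightarrow> ('a \<Rightarrow> 'a \<Rightarrow> real) \<Rightarrow> real \<Rightarrow> bool" where
  "CD_inf V E \<sigma> K \<longleftrightarrow> (\<forall>f x. x \<in> V \<longrightarrow> sGamma2 V E \<sigma> f f x \<ge> K * sGamma V E \<sigma> f f x)"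

definition eigenfun :: "'a set \<Rightarrow> ('a \<Rightarrow> 'a \<Rightarrow> bool) \<Rightarrow> ('a \<Rightarrow> 'a \<Rightarrow> real) \<Rightarrow> real \<Rightarrow> ('a \<Rightarrow> real) \<Rightarrow> bool" where
  "eigenfun V E \<sigma> lam f \<longleftrightarrow> (\<exists>x\<in>V. f x \<noteq> 0) \<and> (\<forall>x\<in>V. - slap V E \<sigma> f x = lam * f x)"

definition eigenvalue :: "'a set \<Rightarrow> ('a \<Rightarrow> 'a \<Rightarrow> bool) \<Rightarrow> ('a \<Rightarrow> 'a \<Rightarrow> real) \<Rightarrow> real \<Rightarrow> bool" where
  "eigenvalue V E \<sigma> lam \<longleftrightarrow> (\<exists>f. eigenfun V E \<sigma> lam f)"

definition simple_eigenvalue :: "'a set \<Rightarrow> ('a \<Rightarrow> 'a \<Rightarrow> bool) \<Rightarrow> ('a \<Rightarrow> 'a \<Rightarrow> real) \<Rightarrow> real \<Rightarrow> bool" where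
  "simple_eigenvalue V E \<sigma> lam \<longleftrightarrow> eigenvalue V E \<sigma> lam \<and>
     (\<forall>f g. eigenfun V E \<sigma> lam f \<longrightarrow> eigenfun V E \<sigma> lam g \<longrightarrow> (\<exists>c. \<forall>x\<in>V. f x = c * g x))"

end

theory Submission
  imports Defs "HOL-Analysis.Convex"
begin

lemma walk_single[simp]: "walk V E [a] \<longleftrightarrow> a \<in> V"
  by (auto simp: walk_def)

lemma walk_Cons_Cons[simp]: "walk V E (a # b # r) \<longleftrightarrow> a \<in> V \<and> E a b \<and> walk V E (b # r)"
proof
  assume w: "walk V E (a # b # r)"
  have "E a b" using w unfolding walk_def by (metis Suc_less_eq length_Cons nth_Cons_0 nth_Cons_Suc zero_less_Suc)
  moreover have "walk V E (b # r)" unfolding walk_def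
  proof (intro conjI allI impI)
    show "set (b # r) \<subseteq> V" using w by (auto simp: walk_def)
  next
    fix i assume "Suc i < length (b # r)"
    then have "Suc (Suc i) < length (a # b # r)" by simp
    then have "E ((a # b # r) ! Suc i) ((a # b # r) ! Suc (Suc i))" using w unfolding walk_def by blast
    then show "E ((b # r) ! i) ((b # r) ! Suc i)" by simp
  qed simp
  ultimately show "a \<in> V \<and> E a b \<and> walk V E (b # r)" using w by (auto simp: walk_def)
next
  assume h: "a \<in> V \<and> E a b \<and> walk V E (b # r)"
  show "walk V E (a # b # r)" unfolding walk_def
  proof (intro conjI allI impI)
    show "set (a # b # r) \<subseteq> V" using h by (auto simp: walk_def)
  next
    fix i assume i: "Suc i < length (a # b # r)"
    show "E ((a # b # r) ! i) ((a # b # r) ! Suc i)"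
    proof (cases i)
      case 0 then show ?thesis using h by simp
    next
      case (Suc j) then show ?thesis using h i unfolding walk_def by auto
    qed
  qed simp
qed

lemma walk_ConsD: "walk V E (a # r) \<Longrightarrow> r \<noteq> [] \<Longrightarrow> walk V E r"
  by (cases r) auto

lemma walk_appendD1: "walk V E (xs @ ys) \<Longrightarrow> xs \<noteq> [] \<Longrightarrow> walk V E xs"
proof (induction xs)
  case Nil then show ?case by simp
next
  case (Cons a xs)
  show ?case
  proof (cases xs)
    case Nil then show ?thesis using Cons.prems by (auto simp: walk_def)
  next
    case (Cons b r)
    then show ?thesis using Cons.prems Cons.IH by auto
  qed
qed

lemma walk_appendD2: "walk V E (xs @ ys) \<Longrightarrow> ys \<noteq> [] \<Longrightarrow> walk V E ys"
proof (induction xs)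
  case Nil then show ?case by simp
next
  case (Cons a xs)
  then show ?case using walk_ConsD[of V E a "xs @ ys"] by auto
qed

lemma walk_join: "walk V E (xs @ [u]) \<Longrightarrow> walk V E (u # ys) \<Longrightarrow> walk V E (xs @ u # ys)"
proof (induction xs)
  case Nil then show ?case by simp
next
  case (Cons a xs)
  show ?case
  proof (cases xs)
    case Nil then show ?thesis using Cons.prems by auto
  next
    case (Cons b r)
    then show ?thesis using Cons.prems Cons.IH by auto
  qed
qed

lemma walk_snoc: "walk V E xs \<Longrightarrow> E (last xs) y \<Longrightarrow> y \<in> V \<Longrightarrow> walk V E (xs @ [y])"
proof -
  assume w: "walk V E xs" and e: "E (last xs) y" and y: "y \<in> V"
  have ne: "xs \<noteq> []" using w by (simp add: walk_def)
  then obtain ys where xs: "xs = ys @ [last xs]" by (metis append_butlast_last_id)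
  have "walk V E (ys @ last xs # [y])"
    by (rule walk_join) (use w xs e y ne in \<open>auto simp: walk_def\<close>)
  then show ?thesis using xs by (metis append.assoc append_Cons append_Nil)
qed

lemma walk_rev: "simple_graph V E \<Longrightarrow> walk V E xs \<Longrightarrow> walk V E (rev xs)"
proof (induction xs rule: induct_list012)
  case 1 then show ?case by simp
next
  case (2 x) then show ?case by simp
next
  case (3 a b r)
  have "walk V E (rev (b # r))" using 3 by auto
  moreover have "E b a" using 3 by (auto simp: simple_graph_def)
  moreover have "last (rev (b # r)) = b" by simp
  ultimately have "walk V E (rev (b # r) @ [a])" using 3 by (intro walk_snoc) auto
  then show ?case by simp
qed

fun psgn :: "('a \<Rightarrow> 'a \<Rightarrow> real) \<Rightarrow> 'a list \<Rightarrow> real" where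
  "psgn s [] = 1"
| "psgn s [a] = 1"
| "psgn s (a # b # r) = s a b * psgn s (b # r)"

lemma psgn_append: "psgn s (xs @ [u] @ ys) = psgn s (xs @ [u]) * psgn s (u # ys)"
proof (induction xs rule: induct_list012)
  case 1 then show ?case by simp
next
  case (2 x) then show ?case by simp
next
  case (3 a b r) then show ?case by simp
qed

lemma psgn_snoc2: "psgn s (xs @ [a, b]) = psgn s (xs @ [a]) * s a b"
  using psgn_append[of s xs a "[b]"] by simp

lemma psgn_pm: "is_sign E s \<Longrightarrow> walk V E xs \<Longrightarrow> psgn s xs = 1 \<or> psgn s xs = -1"
proof (induction xs rule: induct_list012)
  case (3 a b r)
  then have "s a b = 1 \<or> s a b = -1" "psgn s (b # r) = 1 \<or> psgn s (b # r) = -1"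
    by (auto simp: is_sign_def)
  then show ?case by auto
qed auto

lemma psgn_sq: "is_sign E s \<Longrightarrow> walk V E xs \<Longrightarrow> psgn s xs * psgn s xs = 1"
  using psgn_pm by fastforce

lemma psgn_rev: "is_sign E s \<Longrightarrow> walk V E xs \<Longrightarrow> psgn s (rev xs) = psgn s xs"
proof (induction xs rule: induct_list012)
  case (3 a b r)
  have "psgn s (rev (a # b # r)) = psgn s (rev r @ [b, a])" by simp
  also have "\<dots> = psgn s (rev r @ [b]) * s b a" by (rule psgn_snoc2)
  also have "psgn s (rev r @ [b]) = psgn s (b # r)" using 3 by auto
  also have "s b a = s a b" using 3(3,4) unfolding is_sign_def by (metis walk_Cons_Cons)
  finally show ?case by simp
qed auto

lemma psgn_nth: "psgn s xs = (\<Prod>i<length xs - 1. s (xs ! i) (xs ! Suc i))"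
proof (induction xs rule: induct_list012)
  case (3 a b r)
  have "(\<Prod>i<length (a # b # r) - 1. s ((a # b # r) ! i) ((a # b # r) ! Suc i))
        = s a b * (\<Prod>i<length (b # r) - 1. s ((b # r) ! i) ((b # r) ! Suc i))"
    by (simp add: prod.lessThan_Suc_shift del: prod.lessThan_Suc)
  then show ?case using 3 by simp
qed auto

lemma cycle_sign_psgn: "cs \<noteq> [] \<Longrightarrow> cycle_sign s cs = psgn s (cs @ [hd cs])"
proof -
  assume ne: "cs \<noteq> []"
  let ?n = "length cs"
  have "psgn s (cs @ [hd cs]) = (\<Prod>i<?n. s ((cs @ [hd cs]) ! i) ((cs @ [hd cs]) ! Suc i))"
    by (simp add: psgn_nth)
  also have "\<dots> = (\<Prod>i<?n. s (cs ! i) (cs ! (Suc i mod ?n)))"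
  proof (rule prod.cong)
    fix i assume "i \<in> {..<?n}"
    then have i: "i < ?n" by simp
    show "s ((cs @ [hd cs]) ! i) ((cs @ [hd cs]) ! Suc i) = s (cs ! i) (cs ! (Suc i mod ?n))"
    proof (cases "Suc i < ?n")
      case True then show ?thesis using i by (simp add: nth_append)
    next
      case False then have "Suc i = ?n" using i by simp
      then show ?thesis using i ne by (simp add: nth_append hd_conv_nth)
    qed
  qed simp
  finally show ?thesis by (simp add: cycle_sign_def)
qed

lemma gdist_walk:
  assumes "connected_graph V E" "x \<in> V" "y \<in> V"
  shows "\<exists>W. walk V E W \<and> hd W = x \<and> last W = y \<and> length W = Suc (gdist V E x y)"
proof -
  obtain xs where xs: "walk V E xs" "hd xs = x" "last xs = y"
    using assms unfolding connected_graph_def by blast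
  then have "xs \<noteq> []" by (simp add: walk_def)
  then have "\<exists>n. \<exists>xs. walk V E xs \<and> hd xs = x \<and> last xs = y \<and> length xs = Suc n"
    using xs by (intro exI[of _ "length xs - 1"] exI[of _ xs]) auto
  then show ?thesis unfolding gdist_def by (rule LeastI_ex)
qed

lemma gdist_le:
  assumes "walk V E W" "hd W = x" "last W = y"
  shows "gdist V E x y \<le> length W - 1"
proof -
  have "W \<noteq> []" using assms by (simp add: walk_def)
  then have "\<exists>xs. walk V E xs \<and> hd xs = x \<and> last xs = y \<and> length xs = Suc (length W - 1)"
    using assms by (intro exI[of _ W]) auto
  then show ?thesis unfolding gdist_def by (rule Least_le)
qed

lemma gdist_diam:
  assumes "simple_graph V E" "x \<in> V" "y \<in> V"
  shows "gdist V E x y \<le> diameter V E"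
proof -
  have fin: "finite V" using assms by (simp add: simple_graph_def)
  have eq: "{gdist V E x y | x y. x \<in> V \<and> y \<in> V} = (\<lambda>(x,y). gdist V E x y) ` (V \<times> V)"
    by auto
  have "finite {gdist V E x y | x y. x \<in> V \<and> y \<in> V}" unfolding eq using fin by simp
  then show ?thesis unfolding diameter_def using assms by (intro Max_ge) auto
qed

definition nobt :: "'a list \<Rightarrow> bool" where
  "nobt W \<longleftrightarrow> (\<forall>i. i + 2 < length W \<longrightarrow> W ! i \<noteq> W ! (i + 2))"

lemma shortest_nobt:
  assumes w: "walk V E W" and l: "length W = Suc (gdist V E (hd W) (last W))"
  shows "nobt W"
  unfolding nobt_def
proof (intro allI impI notI)
  fix i assume i: "i + 2 < length W" and eq: "W ! i = W ! (i + 2)"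
  define B where "B = drop (i + 3) W"
  have d2: "drop (i + 2) W = W ! i # B"
    using i eq Cons_nth_drop_Suc[of "i+2" W] by (simp add: B_def numeral_3_eq_3)
  have t1: "take (Suc i) W = take i W @ [W ! i]"
    using i by (simp add: take_Suc_conv_app_nth)
  have wa: "walk V E (take i W @ [W ! i])"
  proof -
    have "W = take (Suc i) W @ drop (Suc i) W" by simp
    then show ?thesis using w walk_appendD1 t1 by (metis snoc_eq_iff_butlast)
  qed
  have wb: "walk V E (W ! i # B)"
  proof -
    have "W = take (i+2) W @ drop (i+2) W" by simp
    then show ?thesis using w walk_appendD2 d2 by (metis list.distinct(1))
  qed
  have w': "walk V E (take i W @ W ! i # B)" by (rule walk_join[OF wa wb])
  have hd': "hd (take i W @ W ! i # B) = hd W"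
    using i by (cases W; cases i) auto
  have last': "last (take i W @ W ! i # B) = last W"
  proof -
    have "last W = last (drop (i+2) W)" using i by simp
    then show ?thesis using d2 by simp
  qed
  have len': "length (take i W @ W ! i # B) = length W - 2"
    using i by (simp add: B_def)
  have "gdist V E (hd W) (last W) \<le> length W - 2 - 1"
    using gdist_le[OF w' hd' last'] len' by simp
  then show False using l i by simp
qed

lemma closed_walk_sign:
  assumes sg: "simple_graph V E" and sgn: "is_sign E s" and bal: "balanced V E s"
  shows "walk V E W \<Longrightarrow> hd W = last W \<Longrightarrow> psgn s W = 1"
proof (induction "length W" arbitrary: W rule: less_induct)
  case less
  have ne: "W \<noteq> []" using less.prems by (simp add: walk_def)
  show ?case
  proof (cases "length W = 1")
    case True then obtain a where "W = [a]" by (metis One_nat_def length_0_conv length_Suc_conv)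
    then show ?thesis by simp
  next
    case False
    define c where "c = butlast W"
    define a where "a = last W"
    have W: "W = c @ [a]" using ne by (simp add: c_def a_def)
    have cne: "c \<noteq> []" using False W by (cases c) auto
    have "hd W = hd c" using W cne by simp
    then have hdc: "hd c = a" using less.prems(2) unfolding a_def by simp
    have wc: "walk V E c" using walk_appendD1[of V E c "[a]"] less.prems(1) W cne by simp
    show ?thesis
    proof (cases "distinct c")
      case True
      have lastc: "E (last c) a"
      proof -
        have "W = butlast c @ [last c, a]" using W cne by simp
        then have "walk V E [last c, a]" using walk_appendD2[of V E "butlast c" "[last c, a]"] less.prems(1) by simp
        then show ?thesis by simp
      qed
      show ?thesis
      proof (cases "length c \<ge> 3")
        case True
        have "is_cycle V E c" unfolding is_cycle_def using True \<open>distinct c\<close> wc lastc hdc by simp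
        then have "cycle_sign s c = 1" using bal by (simp add: balanced_def)
        then show ?thesis using cycle_sign_psgn[OF cne, of s] W hdc by simp
      next
        case False
        moreover have "length c \<noteq> 0" using cne by simp
        ultimately have "length c = 1 \<or> length c = 2" by linarith
        then show ?thesis
        proof
          assume "length c = 1"
          then have "c = [a]" using hdc by (cases c) auto
          then have "E a a" using lastc by simp
          then show ?thesis using sg by (auto simp: simple_graph_def)
        next
          assume "length c = 2"
          then obtain a' b where cb0: "c = [a', b]"
            by (metis One_nat_def Suc_1 length_0_conv length_Suc_conv)
          then have cb: "c = [a, b]" using hdc by simp
          then have "E a b" using wc by simp
          then have "s a b = s b a" "s a b = 1 \<or> s a b = -1" using sgn by (auto simp: is_sign_def)
          then show ?thesis using W cb by auto
        qed
      qed
    next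
      case False
      then obtain xs ys zs u where c: "c = xs @ [u] @ ys @ [u] @ zs"
        using not_distinct_decomp by blast
      have Wd: "W = xs @ [u] @ (ys @ [u] @ zs @ [a])" using W c by simp
      have w1: "walk V E (xs @ [u])"
        using walk_appendD1[of V E "xs @ [u]" "ys @ [u] @ zs @ [a]"] less.prems(1) Wd by simp
      have w2: "walk V E (u # ys @ [u] @ zs @ [a])"
        using walk_appendD2[of V E xs "u # ys @ [u] @ zs @ [a]"] less.prems(1) Wd by simp
      have w3: "walk V E (u # ys @ [u])"
        using walk_appendD1[of V E "u # ys @ [u]" "zs @ [a]"] w2 by simp
      have w4: "walk V E (u # zs @ [a])"
        using walk_appendD2[of V E "u # ys" "u # zs @ [a]"] w2 by simp
      have w5: "walk V E (xs @ u # zs @ [a])" by (rule walk_join[OF w1 w4])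
      have h5: "hd (xs @ u # zs @ [a]) = last (xs @ u # zs @ [a])"
        using hdc c by (cases xs) auto
      have p3: "psgn s (u # ys @ [u]) = 1"
        using less.hyps[OF _ w3] Wd by simp
      have p5: "psgn s (xs @ u # zs @ [a]) = 1"
        using less.hyps[OF _ w5 h5] Wd by simp
      have "psgn s W = psgn s (xs @ [u]) * psgn s (u # ys @ [u] @ zs @ [a])"
        unfolding Wd by (rule psgn_append)
      also have "psgn s (u # ys @ [u] @ zs @ [a]) = psgn s (u # ys @ [u]) * psgn s (u # zs @ [a])"
        using psgn_append[of s "u # ys" u "zs @ [a]"] by simp
      also have "psgn s (xs @ [u]) * (psgn s (u # ys @ [u]) * psgn s (u # zs @ [a]))
          = psgn s (xs @ u # zs @ [a]) * psgn s (u # ys @ [u])"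
        using psgn_append[of s xs u "zs @ [a]"] by simp
      finally show ?thesis using p3 p5 by simp
    qed
  qed
qed

lemma nbrs_sub: "nbrs V E x \<subseteq> V" by (auto simp: nbrs_def)

lemma nbrs_fin: "simple_graph V E \<Longrightarrow> finite (nbrs V E x)"
  using nbrs_sub finite_subset by (metis simple_graph_def)

lemma slap_cong: "x \<in> V \<Longrightarrow> (\<And>y. y \<in> V \<Longrightarrow> h y = h' y) \<Longrightarrow> slap V E s h x = slap V E s h' x"
proof -
  assume x: "x \<in> V" and h: "\<And>y. y \<in> V \<Longrightarrow> h y = h' y"
  have "(\<Sum>y\<in>nbrs V E x. s x y * h y - h x) = (\<Sum>y\<in>nbrs V E x. s x y * h' y - h' x)"
    using h x by (intro sum.cong) (auto simp: nbrs_def)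
  then show ?thesis unfolding slap_def by simp
qed

lemma slap_lin: "slap V E s (\<lambda>z. a * h z + b * k z) x = a * slap V E s h x + b * slap V E s k x"
proof -
  have "(\<Sum>y\<in>nbrs V E x. s x y * (a * h y + b * k y) - (a * h x + b * k x))
      = a * (\<Sum>y\<in>nbrs V E x. s x y * h y - h x) + b * (\<Sum>y\<in>nbrs V E x. s x y * k y - k x)"
    by (simp add: sum_distrib_left sum.distrib[symmetric] algebra_simps)
  then show ?thesis unfolding slap_def by (simp add: algebra_simps)
qed

lemma slap_scale: "slap V E s (\<lambda>z. a * h z) x = a * slap V E s h x"
  using slap_lin[of V E s a h 0 h x] by simp

lemma slap_add: "slap V E s (\<lambda>z. h z + k z) x = slap V E s h x + slap V E s k x"
  using slap_lin[of V E s 1 h 1 k x] by simp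

lemma deg_mult_slap: "simple_graph V E \<Longrightarrow>
   real (deg V E x) * slap V E s h x = (\<Sum>y\<in>nbrs V E x. s x y * h y - h x)"
proof (cases "deg V E x = 0")
  case True
  assume "simple_graph V E"
  then have "nbrs V E x = {}" using True nbrs_fin[of V E x] by (simp add: deg_def)
  then show ?thesis using True by simp
next
  case False then show ?thesis unfolding slap_def by simp
qed

lemma gamma_sum:
  assumes sg: "simple_graph V E" and sgn: "is_sign E s"
  shows "2 * real (deg V E x) * sGamma V E s g g x = (\<Sum>y\<in>nbrs V E x. (s x y * g y - g x)\<^sup>2)"
proof -
  have "2 * real (deg V E x) * sGamma V E s g g x
     = real (deg V E x) * lap V E (\<lambda>z. g z * g z) x - 2 * g x * (real (deg V E x) * slap V E s g x)"
    unfolding sGamma_def by (simp add: algebra_simps)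
  also have "\<dots> = (\<Sum>y\<in>nbrs V E x. g y * g y - g x * g x) - 2 * g x * (\<Sum>y\<in>nbrs V E x. s x y * g y - g x)"
    unfolding lap_def using deg_mult_slap[OF sg] by simp
  also have "\<dots> = (\<Sum>y\<in>nbrs V E x. g y * g y - g x * g x - 2 * g x * (s x y * g y - g x))"
    by (simp only: sum_subtractf[symmetric] sum_distrib_left)
  also have "\<dots> = (\<Sum>y\<in>nbrs V E x. (s x y * g y - g x)\<^sup>2)"
  proof (rule sum.cong)
    fix y assume "y \<in> nbrs V E x"
    then have "E x y" by (simp add: nbrs_def)
    then have "s x y = 1 \<or> s x y = -1" using sgn by (auto simp: is_sign_def)
    then have "s x y * s x y = 1" by auto
    then show "g y * g y - g x * g x - 2 * g x * (s x y * g y - g x) = (s x y * g y - g x)\<^sup>2"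
      by (simp add: power2_eq_square algebra_simps)
  qed simp
  finally show ?thesis .
qed

lemma gamma2_eig:
  assumes x: "x \<in> V" and eig: "\<And>z. z \<in> V \<Longrightarrow> slap V E s g z = - lam * g z"
  shows "sGamma2 V E s g g x = (1/2) * lap V E (sGamma V E s g g) x + lam * sGamma V E s g g x"
proof -
  have a: "lap V E (\<lambda>z. g z * slap V E s g z) x = lap V E (\<lambda>z. (- lam) * (g z * g z)) x"
    unfolding lap_def by (rule slap_cong[OF x]) (simp add: eig)
  have b: "slap V E s (slap V E s g) x = slap V E s (\<lambda>z. (- lam) * g z) x"
    by (rule slap_cong[OF x]) (simp add: eig)
  have "sGamma V E s g (slap V E s g) x = - lam * sGamma V E s g g x"
    unfolding sGamma_def a b
    using slap_scale[of V E "\<lambda>_ _. 1" "- lam" "\<lambda>z. g z * g z" x] slap_scale[of V E s "- lam" g x] eig[OF x]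
    unfolding lap_def by (simp add: algebra_simps)
  then show ?thesis unfolding sGamma2_def by (simp add: algebra_simps)
qed

lemma deg_le_max: "simple_graph V E \<Longrightarrow> x \<in> V \<Longrightarrow> deg V E x \<le> max_deg V E"
  unfolding max_deg_def simple_graph_def by (intro Max_ge) auto

lemma core:
  assumes sg: "simple_graph V E" and sgn: "is_sign E s" and cd: "CD_inf V E s K"
    and x0: "x0 \<in> V"
    and bnd: "\<And>x. x \<in> V \<Longrightarrow> \<bar>g x\<bar> \<le> 1"
    and eig: "\<And>z. z \<in> V \<Longrightarrow> slap V E s g z = - lam * g z"
    and lpos: "lam > 0" and cpos: "2 * lam - K > 0"
  shows "\<And>x. x \<in> V \<Longrightarrow> (\<Sum>y\<in>nbrs V E x. (s x y * g y - g x)\<^sup>2) \<le> 4 * real (max_deg V E) * (2 * lam - K)"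
proof -
  define c where "c = 2 * lam - K"
  define G where "G = sGamma V E s g g"
  define F where "F = (\<lambda>z. G z + c * (g z * g z))"
  have fin: "finite V" using sg by (simp add: simple_graph_def)
  have "finite (F ` V)" "F ` V \<noteq> {}" using fin x0 by auto
  then have "Max (F ` V) \<in> F ` V" by (rule Max_in)
  then obtain x2 where x2: "x2 \<in> V" "F x2 = Max (F ` V)" by auto
  have Fmax: "\<And>y. y \<in> V \<Longrightarrow> F y \<le> F x2" using x2 fin by (simp add: Max_ge)
  have "real (deg V E x2) * lap V E F x2 = (\<Sum>y\<in>nbrs V E x2. F y - F x2)"
    unfolding lap_def using deg_mult_slap[OF sg] by simp
  also have "\<dots> \<le> 0" using Fmax nbrs_sub by (intro sum_nonpos) (auto simp: nbrs_def)
  finally have "real (deg V E x2) * lap V E F x2 \<le> 0" .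
  moreover have "deg V E x2 = 0 \<Longrightarrow> lap V E F x2 = 0" unfolding lap_def slap_def by simp
  ultimately have lapF: "lap V E F x2 \<le> 0"
  proof (cases "deg V E x2 = 0")
    case False
    then have "real (deg V E x2) > 0" by simp
    then show ?thesis using \<open>real (deg V E x2) * lap V E F x2 \<le> 0\<close> by (simp add: mult_le_0_iff)
  qed simp
  have "lap V E F x2 = lap V E G x2 + c * lap V E (\<lambda>z. g z * g z) x2"
    unfolding F_def lap_def using slap_lin[of V E "\<lambda>_ _. 1" 1 G c "\<lambda>z. g z * g z" x2] by simp
  moreover have "lap V E (\<lambda>z. g z * g z) x2 = 2 * G x2 + 2 * g x2 * slap V E s g x2"
    unfolding G_def sGamma_def by (simp add: field_simps)
  moreover have "slap V E s g x2 = - lam * g x2" using eig x2 by simp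
  ultimately have e1: "lap V E G x2 + c * (2 * G x2 - 2 * lam * (g x2 * g x2)) \<le> 0"
    using lapF by (simp add: algebra_simps)
  have "K * G x2 \<le> sGamma2 V E s g g x2" using cd x2 unfolding CD_inf_def G_def by blast
  also have "\<dots> = (1/2) * lap V E G x2 + lam * G x2" unfolding G_def by (rule gamma2_eig[OF x2(1) eig])
  finally have e2: "K * G x2 \<le> (1/2) * lap V E G x2 + lam * G x2" .
  from e1 e2 have "lam * G x2 \<le> lam * (c * (g x2 * g x2))" unfolding c_def by (simp add: algebra_simps)
  then have "G x2 \<le> c * (g x2 * g x2)" using lpos by simp
  moreover have "g x2 * g x2 \<le> 1" using bnd[OF x2(1)] by (metis abs_le_square_iff abs_one power2_eq_square power_one)
  moreover have "c > 0" using cpos c_def by simp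
  ultimately have "G x2 \<le> c" by (metis mult_left_le order_trans less_le)
  then have "F x2 \<le> 2 * c" unfolding F_def using \<open>g x2 * g x2 \<le> 1\<close> \<open>c > 0\<close>
    by (smt (verit) mult_left_le)
  fix x assume x: "x \<in> V"
  have "G x \<le> F x" unfolding F_def using \<open>c > 0\<close> by (simp add: zero_le_mult_iff)
  then have Gx: "G x \<le> 2 * c" using Fmax[OF x] \<open>F x2 \<le> 2 * c\<close> by simp
  have "(\<Sum>y\<in>nbrs V E x. (s x y * g y - g x)\<^sup>2) = 2 * real (deg V E x) * G x"
    unfolding G_def using gamma_sum[OF sg sgn] by simp
  also have "\<dots> \<le> 2 * real (deg V E x) * (2 * c)" using Gx by (intro mult_left_mono) auto
  also have "\<dots> \<le> 2 * real (max_deg V E) * (2 * c)"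
    using deg_le_max[OF sg x] \<open>c > 0\<close> by (simp add: mult_right_mono)
  finally show "(\<Sum>y\<in>nbrs V E x. (s x y * g y - g x)\<^sup>2) \<le> 4 * real (max_deg V E) * (2 * lam - K)"
    unfolding c_def by (simp add: algebra_simps)
qed

lemma seq_bound:
  fixes h :: "nat \<Rightarrow> real"
  assumes h0: "h 0 = 1" and hj: "h j \<le> 0"
    and one: "\<And>i. i < j \<Longrightarrow> (h (Suc i) - h i)\<^sup>2 \<le> M"
    and two: "\<And>k. 2 * k + 2 \<le> j \<Longrightarrow> (h (2*k+1) - h (2*k))\<^sup>2 + (h (2*k+2) - h (2*k+1))\<^sup>2 \<le> M"
  shows "1 \<le> real j * real ((j + 1) div 2) * M"
proof -
  define d where "d = (\<lambda>i. h (Suc i) - h i)"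
  have pk: "2 * k \<le> j \<Longrightarrow> (\<Sum>i<2*k. (d i)\<^sup>2) \<le> real k * M" for k
  proof (induction k)
    case 0 then show ?case by simp
  next
    case (Suc k)
    have eq: "2 * Suc k = Suc (Suc (2 * k))" by simp
    have se: "(\<Sum>i<2 * Suc k. (d i)\<^sup>2) = (\<Sum>i<2*k. (d i)\<^sup>2) + ((d (2*k))\<^sup>2 + (d (2*k+1))\<^sup>2)"
      unfolding eq by simp
    have p2: "(d (2*k))\<^sup>2 + (d (2*k+1))\<^sup>2 \<le> M"
    proof -
      have "2 * k + 2 \<le> j" using Suc.prems by simp
      from two[OF this] show ?thesis unfolding d_def by (simp add: add.commute)
    qed
    have p1: "(\<Sum>i<2*k. (d i)\<^sup>2) \<le> real k * M" using Suc.IH Suc.prems by simp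
    show ?case using se p1 p2 by (simp add: algebra_simps)
  qed
  have S: "(\<Sum>i<j. (d i)\<^sup>2) \<le> real ((j + 1) div 2) * M"
  proof (cases "even j")
    case True
    then obtain k where k: "j = 2 * k" by blast
    then have "(j + 1) div 2 = k" by simp
    then show ?thesis using pk[of k] k by simp
  next
    case False
    then obtain k where k: "j = 2 * k + 1" using oddE by blast
    then have "(j + 1) div 2 = k + 1" by simp
    moreover have "(\<Sum>i<j. (d i)\<^sup>2) = (\<Sum>i<2*k. (d i)\<^sup>2) + (d (2*k))\<^sup>2" using k by simp
    moreover have "(d (2*k))\<^sup>2 \<le> M" using one[of "2*k"] k unfolding d_def by simp
    ultimately show ?thesis using pk[of k] k by (simp add: algebra_simps)
  qed
  have tel: "(\<Sum>i<j. d i) = h j - h 0" unfolding d_def by (rule sum_lessThan_telescope)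
  have a1: "1 \<le> 1 - h j" using hj by simp
  have "(1::real)\<^sup>2 \<le> (1 - h j)\<^sup>2" by (rule power_mono[OF a1]) simp
  moreover have "(1 - h j)\<^sup>2 = (h j - h 0)\<^sup>2" using h0 by (simp add: power2_commute)
  ultimately have "1 \<le> (h j - h 0)\<^sup>2" by simp
  also have "\<dots> = (\<Sum>i<j. d i)\<^sup>2" using tel by simp
  also have "\<dots> \<le> (\<Sum>i<j. (d i)\<^sup>2) * real j"
    using sum_squared_le_sum_of_squares[of d "{..<j}"] by simp
  also have "\<dots> \<le> real ((j + 1) div 2) * M * real j" using S by (intro mult_right_mono) auto
  finally show ?thesis by (simp add: algebra_simps)
qed

lemma lam_pos:
  assumes sg: "simple_graph V E" and sgn: "is_sign E s" and x0: "x0 \<in> V" and g0: "g x0 = 1"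
    and bnd: "\<And>x. x \<in> V \<Longrightarrow> \<bar>g x\<bar> \<le> 1"
    and eig: "\<And>z. z \<in> V \<Longrightarrow> slap V E s g z = - lam * g z" and ln: "lam \<noteq> 0"
  shows "lam > 0 \<and> deg V E x0 > 0"
proof -
  have dpos: "deg V E x0 > 0"
  proof (rule ccontr)
    assume "\<not> deg V E x0 > 0"
    then have "slap V E s g x0 = 0" unfolding slap_def by simp
    then show False using eig[OF x0] g0 ln by simp
  qed
  have "real (deg V E x0) * slap V E s g x0 = (\<Sum>y\<in>nbrs V E x0. s x0 y * g y - g x0)"
    by (rule deg_mult_slap[OF sg])
  also have "\<dots> \<le> 0"
  proof (rule sum_nonpos)
    fix y assume y: "y \<in> nbrs V E x0"
    then have "E x0 y" "y \<in> V" by (auto simp: nbrs_def)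
    then have "s x0 y = 1 \<or> s x0 y = -1" using sgn by (auto simp: is_sign_def)
    moreover have "\<bar>g y\<bar> \<le> 1" using bnd \<open>y \<in> V\<close> by simp
    ultimately show "s x0 y * g y - g x0 \<le> 0" using g0 by auto
  qed
  finally have "real (deg V E x0) * (- lam) \<le> 0" using eig[OF x0] g0 by simp
  then have "lam \<ge> 0" using dpos by (simp add: zero_le_mult_iff)
  then show ?thesis using ln dpos by simp
qed

lemma double_sum_sym:
  assumes sg: "simple_graph V E"
  shows "(\<Sum>x\<in>V. \<Sum>y\<in>nbrs V E x. a x - a y) = (0::real)"
proof -
  have fin: "finite V" using sg by (simp add: simple_graph_def)
  have n: "\<And>x. (\<Sum>y\<in>nbrs V E x. f y) = (\<Sum>y\<in>V. if E x y then f y else 0)" for f :: "'a \<Rightarrow> real"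
    unfolding nbrs_def using fin by (simp add: sum.inter_filter)
  have sym: "\<And>x y. E x y = E y x" using sg by (auto simp: simple_graph_def)
  have "(\<Sum>x\<in>V. \<Sum>y\<in>nbrs V E x. a y) = (\<Sum>x\<in>V. \<Sum>y\<in>V. if E x y then a y else 0)"
    by (rule sum.cong[OF refl]) (rule n)
  also have "\<dots> = (\<Sum>y\<in>V. \<Sum>x\<in>V. if E x y then a y else 0)" by (rule sum.swap)
  also have "\<dots> = (\<Sum>y\<in>V. \<Sum>x\<in>V. if E y x then a y else 0)"
    by (intro sum.cong refl) (metis sym)
  also have "\<dots> = (\<Sum>x\<in>V. \<Sum>y\<in>nbrs V E x. a x)"
    by (rule sum.cong[OF refl]) (rule n[symmetric])
  finally show ?thesis by (simp add: sum_subtractf)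
qed

lemma bad_edge:
  assumes sg: "simple_graph V E" and sgn: "is_sign E s" and x0: "x0 \<in> V" and g0: "g x0 = 1"
    and eig: "\<And>z. z \<in> V \<Longrightarrow> slap V E s g z = - lam * g z" and lp: "lam > 0"
    and dpos: "deg V E x0 > 0"
  shows "\<exists>x y. E x y \<and> s x y * g x * g y \<le> 0"
proof (rule ccontr)
  assume "\<not> ?thesis"
  then have pos: "\<And>x y. E x y \<Longrightarrow> s x y * g x * g y > 0" by force
  have fin: "finite V" using sg by (simp add: simple_graph_def)
  have "(\<Sum>x\<in>V. real (deg V E x) * lam * \<bar>g x\<bar>) = (\<Sum>x\<in>V. \<Sum>y\<in>nbrs V E x. \<bar>g x\<bar> - \<bar>g y\<bar>)"
  proof (rule sum.cong)
    fix x assume x: "x \<in> V"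
    have "real (deg V E x) * lam * \<bar>g x\<bar> = sgn (g x) * (real (deg V E x) * (- slap V E s g x))"
      using eig[OF x] by (simp add: abs_sgn algebra_simps)
    also have "\<dots> = sgn (g x) * (\<Sum>y\<in>nbrs V E x. g x - s x y * g y)"
      using deg_mult_slap[OF sg, of x s g] by (simp add: sum_negf[symmetric])
    also have "\<dots> = (\<Sum>y\<in>nbrs V E x. \<bar>g x\<bar> - \<bar>g y\<bar>)"
      unfolding sum_distrib_left
    proof (rule sum.cong)
      fix y assume "y \<in> nbrs V E x"
      then have e: "E x y" by (simp add: nbrs_def)
      then have p: "s x y * g x * g y > 0" by (rule pos)
      have sv: "s x y = 1 \<or> s x y = -1" using e sgn by (auto simp: is_sign_def)
      show "sgn (g x) * (g x - s x y * g y) = \<bar>g x\<bar> - \<bar>g y\<bar>"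
        using sv p by (auto simp: sgn_if abs_if zero_less_mult_iff)
    qed simp
    finally show "real (deg V E x) * lam * \<bar>g x\<bar> = (\<Sum>y\<in>nbrs V E x. \<bar>g x\<bar> - \<bar>g y\<bar>)" .
  qed simp
  also have "\<dots> = 0" by (rule double_sum_sym[OF sg])
  finally have z: "(\<Sum>x\<in>V. real (deg V E x) * lam * \<bar>g x\<bar>) = 0" .
  have "(\<Sum>x\<in>V. real (deg V E x) * lam * \<bar>g x\<bar>) \<ge> real (deg V E x0) * lam * \<bar>g x0\<bar>"
    using fin x0 lp by (intro member_le_sum) auto
  moreover have "real (deg V E x0) * lam * \<bar>g x0\<bar> > 0" using dpos lp g0 by simp
  ultimately show False using z by simp
qed

lemma path_bound:
  assumes sg: "simple_graph V E" and sgn: "is_sign E s"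
    and w: "walk V E W" and nb: "nobt W" and g0: "g (W ! 0) = 1" and i: "i < length W"
    and neg: "psgn s (take (Suc i) W) * g (W ! i) \<le> 0" and iL: "i \<le> L"
    and bound: "\<And>x. x \<in> V \<Longrightarrow> (\<Sum>y\<in>nbrs V E x. (s x y * g y - g x)\<^sup>2) \<le> M"
  shows "1 \<le> real L * real ((L + 1) div 2) * M"
proof -
  define h where "h = (\<lambda>k. psgn s (take (Suc k) W) * g (W ! k))"
  have Wne: "W \<noteq> []" using w by (simp add: walk_def)
  have tw: "\<And>k. k < length W \<Longrightarrow> walk V E (take (Suc k) W)"
  proof -
    fix k assume "k < length W"
    have "W = take (Suc k) W @ drop (Suc k) W" by simp
    then show "walk V E (take (Suc k) W)" using w walk_appendD1 Wne by (metis take_eq_Nil nat.distinct(1))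
  qed
  have edge: "\<And>k. Suc k < length W \<Longrightarrow> E (W ! k) (W ! Suc k)" using w by (simp add: walk_def)
  have inV: "\<And>k. k < length W \<Longrightarrow> W ! k \<in> V" using w by (auto simp: walk_def)
  have step: "\<And>k. Suc k < length W \<Longrightarrow> (h (Suc k) - h k)\<^sup>2 = (s (W!k) (W!Suc k) * g (W!Suc k) - g (W!k))\<^sup>2"
  proof -
    fix k assume k: "Suc k < length W"
    have t1: "take (Suc k) W = take k W @ [W ! k]" using k by (simp add: take_Suc_conv_app_nth)
    have t2: "take (Suc (Suc k)) W = take k W @ [W ! k, W ! Suc k]"
      using k t1 by (simp add: take_Suc_conv_app_nth)
    define p where "p = psgn s (take (Suc k) W)"
    have pp: "p * p = 1" unfolding p_def using psgn_sq[OF sgn tw[of k]] k by simp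
    have "h (Suc k) = p * s (W!k) (W!Suc k) * g (W!Suc k)"
      unfolding h_def p_def t2 t1 psgn_snoc2 by simp
    moreover have "h k = p * g (W!k)" unfolding h_def p_def by simp
    ultimately have "h (Suc k) - h k = p * (s (W!k) (W!Suc k) * g (W!Suc k) - g (W!k))"
      by (simp add: algebra_simps)
    then have "(h (Suc k) - h k)\<^sup>2 = (p * p) * (s (W!k) (W!Suc k) * g (W!Suc k) - g (W!k))\<^sup>2"
      by (simp only: power2_eq_square mult_ac)
    then show "(h (Suc k) - h k)\<^sup>2 = (s (W!k) (W!Suc k) * g (W!Suc k) - g (W!k))\<^sup>2" using pp by simp
  qed
  have symt: "\<And>a b. E a b \<Longrightarrow> (s a b * g b - g a)\<^sup>2 = (s b a * g a - g b)\<^sup>2"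
  proof -
    fix a b assume e: "E a b"
    then have "s a b = s b a" "s a b = 1 \<or> s a b = -1" using sgn by (auto simp: is_sign_def)
    then show "(s a b * g b - g a)\<^sup>2 = (s b a * g a - g b)\<^sup>2" by (auto simp: power2_eq_square algebra_simps)
  qed
  have fn: "\<And>x. finite (nbrs V E x)" using nbrs_fin[OF sg] by blast
  have one: "\<And>k. k < i \<Longrightarrow> (h (Suc k) - h k)\<^sup>2 \<le> M"
  proof -
    fix k assume k: "k < i"
    let ?x = "W ! k" and ?y = "W ! Suc k"
    have ks: "Suc k < length W" using k i by simp
    have yn: "?y \<in> nbrs V E ?x" using edge[OF ks] inV[OF ks] by (simp add: nbrs_def)
    have "(h (Suc k) - h k)\<^sup>2 = (s ?x ?y * g ?y - g ?x)\<^sup>2" by (rule step[OF ks])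
    also have "\<dots> \<le> (\<Sum>y\<in>nbrs V E ?x. (s ?x y * g y - g ?x)\<^sup>2)"
      by (rule member_le_sum[OF yn _ fn]) simp
    also have "\<dots> \<le> M" using bound inV ks by simp
    finally show "(h (Suc k) - h k)\<^sup>2 \<le> M" .
  qed
  have two: "\<And>k. 2 * k + 2 \<le> i \<Longrightarrow> (h (2*k+1) - h (2*k))\<^sup>2 + (h (2*k+2) - h (2*k+1))\<^sup>2 \<le> M"
  proof -
    fix k assume k: "2 * k + 2 \<le> i"
    let ?u = "W ! (2*k)" and ?x = "W ! (2*k+1)" and ?v = "W ! (2*k+2)"
    have l1: "Suc (2*k) < length W" "Suc (2*k+1) < length W" using k i by auto
    have uv: "?u \<noteq> ?v" using nb l1 unfolding nobt_def by simp
    have e1: "E ?u ?x" using edge[OF l1(1)] by simp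
    have e2: "E ?x ?v" using edge[OF l1(2)] by simp
    have un: "?u \<in> nbrs V E ?x" using e1 sg inV[of "2*k"] l1 by (auto simp: nbrs_def simple_graph_def)
    have vn: "?v \<in> nbrs V E ?x" using e2 inV[of "2*k+2"] l1 by (auto simp: nbrs_def)
    have a: "(h (2*k+1) - h (2*k))\<^sup>2 = (s ?x ?u * g ?u - g ?x)\<^sup>2"
      using step[OF l1(1)] symt[OF e1] by simp
    have b: "(h (2*k+2) - h (2*k+1))\<^sup>2 = (s ?x ?v * g ?v - g ?x)\<^sup>2"
      using step[OF l1(2)] by (simp add: add.commute)
    have "(s ?x ?u * g ?u - g ?x)\<^sup>2 + (s ?x ?v * g ?v - g ?x)\<^sup>2
        = (\<Sum>y\<in>{?u, ?v}. (s ?x y * g y - g ?x)\<^sup>2)" using uv by simp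
    also have "\<dots> \<le> (\<Sum>y\<in>nbrs V E ?x. (s ?x y * g y - g ?x)\<^sup>2)"
      by (rule sum_mono2[OF fn]) (use un vn in auto)
    also have "\<dots> \<le> M" using bound inV l1 by simp
    finally show "(h (2*k+1) - h (2*k))\<^sup>2 + (h (2*k+2) - h (2*k+1))\<^sup>2 \<le> M" using a b by simp
  qed
  have h0: "h 0 = 1"
  proof -
    have "take (Suc 0) W = [W ! 0]" using Wne by (cases W) auto
    then show ?thesis unfolding h_def using g0 by simp
  qed
  have hi: "h i \<le> 0" unfolding h_def using neg .
  have r: "1 \<le> real i * real ((i + 1) div 2) * M" by (rule seq_bound[of h i M, OF h0 hi one two])
  have "i \<noteq> 0" using h0 hi by (cases i) auto
  then have M0: "0 \<le> M" using one[of 0] by (meson order_trans zero_le_power2 not_gr_zero)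
  have "i * ((i + 1) div 2) \<le> L * ((L + 1) div 2)" using iL by (intro mult_le_mono div_le_mono) auto
  then have "real i * real ((i + 1) div 2) \<le> real L * real ((L + 1) div 2)"
    by (metis of_nat_le_iff of_nat_mult)
  then have "real i * real ((i + 1) div 2) * M \<le> real L * real ((L + 1) div 2) * M"
    using M0 by (rule mult_right_mono)
  then show ?thesis using r by simp
qed

lemma ceil_half: "real_of_int \<lceil>real n / 2\<rceil> = real ((n + 1) div 2)"
proof -
  have "\<lceil>real n / 2\<rceil> = int ((n + 1) div 2)"
  proof (cases "even n")
    case True then obtain k where "n = 2 * k" by blast
    then show ?thesis by simp
  next
    case False then obtain k where k: "n = 2 * k + 1" using oddE by blast
    have "real n / 2 = real k + 1/2" using k by simp
    then have "\<lceil>real n / 2\<rceil> = int k + 1" by (simp add: ceiling_eq_iff)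
    then show ?thesis using k by simp
  qed
  then show ?thesis by simp
qed

lemma final_arith:
  fixes X M :: real
  assumes "1 \<le> X * M" "0 \<le> X"
  shows "1 / M \<le> X"
proof (cases "M > 0")
  case True then show ?thesis using assms by (simp add: divide_le_eq)
next
  case False then have "X * M \<le> 0" using assms(2) by (simp add: mult_nonneg_nonpos)
  then show ?thesis using assms by simp
qed

lemma trivial_case:
  assumes "2 * lam - K \<le> (0::real)"
  shows "1 / (4 * real d * (2 * lam - K)) \<le> real n * real_of_int \<lceil>real n / 2\<rceil>"
proof -
  have "4 * real d * (2 * lam - K) \<le> 0" using assms by (simp add: mult_nonneg_nonpos)
  then have "1 / (4 * real d * (2 * lam - K)) \<le> 0" by (simp add: divide_nonpos_nonneg)
  also have "0 \<le> real n * real_of_int \<lceil>real n / 2\<rceil>" by (simp add: ceil_half)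
  finally show ?thesis .
qed

lemma concl:
  assumes sg: "simple_graph V E" and sgn: "is_sign E s" and cd: "CD_inf V E s K"
    and x0: "x0 \<in> V"
    and bnd: "\<And>x. x \<in> V \<Longrightarrow> \<bar>g x\<bar> \<le> 1"
    and eig: "\<And>z. z \<in> V \<Longrightarrow> slap V E s g z = - lam * g z"
    and lpos: "lam > 0" and cpos: "2 * lam - K > 0"
    and w: "walk V E W" and nb: "nobt W" and W0: "W ! 0 = x0" and g0: "g x0 = 1" and i: "i < length W"
    and neg: "psgn s (take (Suc i) W) * g (W ! i) \<le> 0" and iL: "i \<le> L"
  shows "1 / (4 * real (max_deg V E) * (2 * lam - K)) \<le> real L * real_of_int \<lceil>real L / 2\<rceil>"
proof -
  have b: "\<And>x. x \<in> V \<Longrightarrow> (\<Sum>y\<in>nbrs V E x. (s x y * g y - g x)\<^sup>2) \<le> 4 * real (max_deg V E) * (2 * lam - K)"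
    by (rule core[OF sg sgn cd x0 bnd eig lpos cpos])
  have "1 \<le> real L * real ((L + 1) div 2) * (4 * real (max_deg V E) * (2 * lam - K))"
    by (rule path_bound[OF sg sgn w nb _ i neg iL b]) (use W0 g0 in simp)
  then have "1 \<le> (real L * real ((L + 1) div 2)) * (4 * real (max_deg V E) * (2 * lam - K))"
    by (simp only: mult.assoc)
  then have "1 / (4 * real (max_deg V E) * (2 * lam - K)) \<le> real L * real ((L + 1) div 2)"
    by (rule final_arith) simp
  then show ?thesis unfolding ceil_half .
qed

lemma normalize:
  assumes sg: "simple_graph V E" and ex: "\<exists>x\<in>V. f x \<noteq> 0"
    and eig: "\<And>z. z \<in> V \<Longrightarrow> - slap V E s f z = lam * f z"
  shows "\<exists>x0 g. x0 \<in> V \<and> g x0 = 1 \<and> (\<forall>x\<in>V. \<bar>g x\<bar> \<le> 1) \<and> (\<forall>z\<in>V. slap V E s g z = - lam * g z)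
           \<and> (\<forall>z. f z = 0 \<longrightarrow> g z = 0)"
proof -
  have fin: "finite V" using sg by (simp add: simple_graph_def)
  have ne: "V \<noteq> {}" using ex by auto
  have "Max ((\<lambda>z. \<bar>f z\<bar>) ` V) \<in> (\<lambda>z. \<bar>f z\<bar>) ` V" using fin ne by (intro Max_in) auto
  then obtain x0 where x0: "x0 \<in> V" "\<bar>f x0\<bar> = Max ((\<lambda>z. \<bar>f z\<bar>) ` V)" by auto
  have mx: "\<bar>f x\<bar> \<le> \<bar>f x0\<bar>" if x: "x \<in> V" for x
  proof -
    have "\<bar>f x\<bar> \<le> Max ((\<lambda>z. \<bar>f z\<bar>) ` V)" using fin x by (intro Max_ge) auto
    then show ?thesis using x0(2) by simp
  qed
  have nz: "f x0 \<noteq> 0"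
  proof
    assume "f x0 = 0"
    obtain x where "x \<in> V" "f x \<noteq> 0" using ex by blast
    then show False using mx[of x] \<open>f x0 = 0\<close> by simp
  qed
  define g where "g = (\<lambda>z. (1 / f x0) * f z)"
  have "g x0 = 1" using nz by (simp add: g_def)
  moreover have "\<forall>x\<in>V. \<bar>g x\<bar> \<le> 1"
  proof
    fix x assume x: "x \<in> V"
    have "\<bar>g x\<bar> = \<bar>f x\<bar> / \<bar>f x0\<bar>" unfolding g_def by (simp add: abs_mult)
    also have "\<dots> \<le> 1" using mx[OF x] nz by simp
    finally show "\<bar>g x\<bar> \<le> 1" .
  qed
  moreover have "\<forall>z\<in>V. slap V E s g z = - lam * g z"
  proof
    fix z assume z: "z \<in> V"
    have "slap V E s g z = (1 / f x0) * slap V E s f z" unfolding g_def by (rule slap_scale)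
    also have "slap V E s f z = - lam * f z" using eig[OF z] by simp
    finally show "slap V E s g z = - lam * g z" unfolding g_def by simp
  qed
  moreover have "\<forall>z. f z = 0 \<longrightarrow> g z = 0" by (simp add: g_def)
  ultimately show ?thesis using x0(1) by (intro exI[of _ x0] exI[of _ g]) simp
qed

lemma shortest_from:
  assumes sg: "simple_graph V E" and cn: "connected_graph V E" and x0: "x0 \<in> V" and v: "v \<in> V"
  shows "\<exists>P. walk V E P \<and> hd P = x0 \<and> last P = v \<and> nobt P \<and> length P = Suc (gdist V E x0 v)
           \<and> gdist V E x0 v \<le> diameter V E"
proof -
  obtain P where P: "walk V E P" "hd P = x0" "last P = v" "length P = Suc (gdist V E x0 v)"
    using gdist_walk[OF cn x0 v] by blast
  have "nobt P" using shortest_nobt[OF P(1)] P by simp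
  then show ?thesis using P gdist_diam[OF sg x0 v] by (intro exI[of _ P]) simp
qed

lemma use_path:
  assumes sg: "simple_graph V E" and sgn: "is_sign E s" and cd: "CD_inf V E s K"
    and x0: "x0 \<in> V"
    and bnd: "\<And>x. x \<in> V \<Longrightarrow> \<bar>g x\<bar> \<le> 1"
    and eig: "\<And>z. z \<in> V \<Longrightarrow> slap V E s g z = - lam * g z"
    and lpos: "lam > 0" and cpos: "2 * lam - K > 0" and g0: "g x0 = 1"
    and P: "walk V E P" "hd P = x0" "nobt P" "length P - 1 \<le> L"
    and neg: "psgn s P * g (last P) \<le> 0"
  shows "1 / (4 * real (max_deg V E) * (2 * lam - K)) \<le> real L * real_of_int \<lceil>real L / 2\<rceil>"
proof -
  have ne: "P \<noteq> []" using P by (simp add: walk_def)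
  have "P ! 0 = x0" using P ne by (simp add: hd_conv_nth)
  moreover have "take (Suc (length P - 1)) P = P" using ne by simp
  moreover have "P ! (length P - 1) = last P" using ne by (simp add: last_conv_nth)
  ultimately show ?thesis
    using concl[OF sg sgn cd x0 bnd eig lpos cpos P(1) P(3) _ g0, of "length P - 1" L] ne neg P(4)
    by (metis diff_less zero_less_one length_greater_0_conv)
qed

lemma part1:
  assumes sg: "simple_graph V E" and cn: "connected_graph V E" and sgn: "is_sign E s" and cd: "CD_inf V E s K"
    and x0: "x0 \<in> V"
    and bnd: "\<And>x. x \<in> V \<Longrightarrow> \<bar>g x\<bar> \<le> 1"
    and eig: "\<And>z. z \<in> V \<Longrightarrow> slap V E s g z = - lam * g z"
    and lpos: "lam > 0" and cpos: "2 * lam - K > 0" and g0: "g x0 = 1"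
    and ab: "E a b" "s a b * g a * g b \<le> 0" "gdist V E x0 a \<le> gdist V E x0 b"
  shows "1 / (4 * real (max_deg V E) * (2 * lam - K))
     \<le> real (diameter V E + 1) * real_of_int \<lceil>real (diameter V E + 1) / 2\<rceil>"
proof -
  have aV: "a \<in> V" and bV: "b \<in> V" using ab(1) sg by (auto simp: simple_graph_def)
  obtain P where P: "walk V E P" "hd P = x0" "last P = a" "nobt P" "length P = Suc (gdist V E x0 a)"
     "gdist V E x0 a \<le> diameter V E"
    using shortest_from[OF sg cn x0 aV] by blast
  have Pne: "P \<noteq> []" using P by (simp add: walk_def)
  show ?thesis
  proof (cases "psgn s P * g a \<le> 0")
    case True
    show ?thesis
      by (rule use_path[OF sg sgn cd x0 bnd eig lpos cpos g0 P(1) P(2) P(4)]) (use True P in simp_all)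
  next
    case False
    define W where "W = P @ [b]"
    have wW: "walk V E W" unfolding W_def by (rule walk_snoc) (use P ab bV in simp_all)
    have hW: "hd W = x0" using P Pne by (simp add: W_def)
    have nW: "nobt W" unfolding nobt_def
    proof (intro allI impI)
      fix i assume i: "i + 2 < length W"
      show "W ! i \<noteq> W ! (i + 2)"
      proof (cases "i + 2 < length P")
        case True then show ?thesis using P(4) unfolding nobt_def W_def by (simp add: nth_append)
      next
        case False
        then have i2: "i + 2 = length P" using i by (simp add: W_def)
        have wi: "W ! (i + 2) = b" using i2 by (simp add: W_def nth_append)
        have wi': "W ! i = P ! i" using i2 by (simp add: W_def nth_append)
        show ?thesis
        proof
          assume "W ! i = W ! (i + 2)"
          then have Pb: "P ! i = b" using wi wi' by simp
          have "walk V E (take (Suc i) P)"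
            using walk_appendD1[of V E "take (Suc i) P" "drop (Suc i) P"] P(1) Pne by simp
          moreover have "hd (take (Suc i) P) = x0" using P(2) Pne by (cases P) auto
          moreover have "last (take (Suc i) P) = b" using Pb i2 by (simp add: take_Suc_conv_app_nth)
          ultimately have "gdist V E x0 b \<le> length (take (Suc i) P) - 1" by (rule gdist_le)
          then have "gdist V E x0 b \<le> i" using i2 by simp
          then show False using ab(3) P(5) i2 by simp
        qed
      qed
    qed
    have Pd: "P = butlast P @ [a]" using Pne P(3) by (metis append_butlast_last_id)
    have psW: "psgn s W = psgn s P * s a b"
      unfolding W_def by (subst (1 2) Pd) (simp add: psgn_snoc2)
    have pp: "psgn s P * psgn s P = 1" by (rule psgn_sq[OF sgn P(1)])
    have "(psgn s P * g a) * (psgn s W * g b) = (psgn s P * psgn s P) * (s a b * g a * g b)"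
      unfolding psW by (simp add: algebra_simps)
    also have "\<dots> \<le> 0" using pp ab(2) by simp
    finally have prod: "(psgn s P * g a) * (psgn s W * g b) \<le> 0" .
    have "psgn s W * g b \<le> 0"
    proof (rule ccontr)
      assume "\<not> psgn s W * g b \<le> 0"
      then have "(psgn s P * g a) * (psgn s W * g b) > 0" using False by (simp add: mult_pos_pos)
      then show False using prod by simp
    qed
    moreover have "last W = b" by (simp add: W_def)
    moreover have "length W - 1 \<le> diameter V E + 1" using P by (simp add: W_def)
    ultimately show ?thesis
      by (intro use_path[OF sg sgn cd x0 bnd eig lpos cpos g0 wW hW nW]) auto
  qed
qed

lemma part2_bal:
  assumes sg: "simple_graph V E" and cn: "connected_graph V E" and sgn: "is_sign E s" and cd: "CD_inf V E s K"
    and bal: "balanced V E s"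
    and x0: "x0 \<in> V"
    and bnd: "\<And>x. x \<in> V \<Longrightarrow> \<bar>g x\<bar> \<le> 1"
    and eig: "\<And>z. z \<in> V \<Longrightarrow> slap V E s g z = - lam * g z"
    and lpos: "lam > 0" and cpos: "2 * lam - K > 0" and g0: "g x0 = 1"
    and ab: "E a b" "s a b * g a * g b \<le> 0"
  shows "1 / (4 * real (max_deg V E) * (2 * lam - K))
     \<le> real (diameter V E) * real_of_int \<lceil>real (diameter V E) / 2\<rceil>"
proof -
  have aV: "a \<in> V" and bV: "b \<in> V" using ab(1) sg by (auto simp: simple_graph_def)
  obtain P where P: "walk V E P" "hd P = x0" "last P = a" "nobt P" "length P = Suc (gdist V E x0 a)"
     "gdist V E x0 a \<le> diameter V E"
    using shortest_from[OF sg cn x0 aV] by blast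
  obtain Q where Q: "walk V E Q" "hd Q = x0" "last Q = b" "nobt Q" "length Q = Suc (gdist V E x0 b)"
     "gdist V E x0 b \<le> diameter V E"
    using shortest_from[OF sg cn x0 bV] by blast
  have Qne: "Q \<noteq> []" using Q by (simp add: walk_def)
  have Pne: "P \<noteq> []" using P by (simp add: walk_def)
  obtain R where R: "rev Q = b # R"
    using Qne Q(3) by (cases "rev Q") (auto simp: last_rev[symmetric] hd_rev)
  have wR: "walk V E (b # R)" using walk_rev[OF sg Q(1)] R by simp
  have wPb: "walk V E (P @ [b])" by (rule walk_snoc) (use P ab bV in simp_all)
  have wC: "walk V E (P @ b # R)" by (rule walk_join[OF wPb wR])
  have hC: "hd (P @ b # R) = x0" using P Pne by simp
  have lC: "last (P @ b # R) = x0"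
  proof -
    have "last (b # R) = last (rev Q)" using R by simp
    also have "\<dots> = hd Q" using Qne by (simp add: last_rev)
    finally show ?thesis using Q(2) by simp
  qed
  have c1: "psgn s (P @ b # R) = 1" by (rule closed_walk_sign[OF sg sgn bal wC]) (use hC lC in simp)
  have Pd: "P = butlast P @ [a]" using Pne P(3) by (metis append_butlast_last_id)
  have "psgn s (P @ [b]) = psgn s P * s a b" by (subst (1 2) Pd) (simp add: psgn_snoc2)
  moreover have "psgn s (b # R) = psgn s Q" using psgn_rev[OF sgn Q(1)] R by simp
  moreover have "psgn s (P @ b # R) = psgn s (P @ [b]) * psgn s (b # R)"
    using psgn_append[of s P b R] by simp
  ultimately have prod1: "psgn s P * s a b * psgn s Q = 1" using c1 by simp
  have ss: "s a b * s a b = 1"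
  proof -
    have "s a b = 1 \<or> s a b = -1" using ab(1) sgn by (auto simp: is_sign_def)
    then show ?thesis by auto
  qed
  have "psgn s P * psgn s Q = s a b"
  proof -
    have "s a b = s a b * (psgn s P * s a b * psgn s Q)" using prod1 by simp
    also have "\<dots> = (s a b * s a b) * (psgn s P * psgn s Q)" by (simp add: algebra_simps)
    finally show ?thesis using ss by simp
  qed
  then have prod: "(psgn s P * g a) * (psgn s Q * g b) \<le> 0"
    using ab(2) by (simp add: algebra_simps)
  show ?thesis
  proof (cases "psgn s P * g a \<le> 0")
    case True
    show ?thesis
      by (rule use_path[OF sg sgn cd x0 bnd eig lpos cpos g0 P(1) P(2) P(4)]) (use True P in simp_all)
  next
    case False
    have "psgn s Q * g b \<le> 0"
    proof (rule ccontr)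
      assume "\<not> psgn s Q * g b \<le> 0"
      then have "(psgn s P * g a) * (psgn s Q * g b) > 0" using False by (simp add: mult_pos_pos)
      then show False using prod by simp
    qed
    then show ?thesis
      by (intro use_path[OF sg sgn cd x0 bnd eig lpos cpos g0 Q(1) Q(2) Q(4)]) (use Q in auto)
  qed
qed

theorem corollary3p10:
  fixes V :: "'a set" and E :: "'a \<Rightarrow> 'a \<Rightarrow> bool" and \<sigma> :: "'a \<Rightarrow> 'a \<Rightarrow> real"
    and K lam :: real
  assumes "simple_graph V E" and "connected_graph V E"
    and "is_sign E \<sigma>"
    and "CD_inf V E \<sigma> K"
    and "eigenvalue V E \<sigma> lam" and "lam \<noteq> 0"
    and "\<And>\<mu>. eigenvalue V E \<sigma> \<mu> \<Longrightarrow> \<mu> \<noteq> 0 \<Longrightarrow> lam \<le> \<mu>"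
  shows "real (diameter V E + 1) * real_of_int \<lceil>real (diameter V E + 1) / 2\<rceil>
           \<ge> 1 / (4 * real (max_deg V E) * (2 * lam - K)) \<and>
         ((\<not> simple_eigenvalue V E \<sigma> lam \<or> balanced V E \<sigma>) \<longrightarrow>
         real (diameter V E) * real_of_int \<lceil>real (diameter V E) / 2\<rceil>
           \<ge> 1 / (4 * real (max_deg V E) * (2 * lam - K)))"
proof (cases "2 * lam - K > 0")
  case False
  then have F: "2 * lam - K \<le> 0" by simp
  show ?thesis using trivial_case[OF F] by blast
next
  case True
  note sg = assms(1) and cn = assms(2) and sgn = assms(3) and cd = assms(4) and ln = assms(6)
  obtain f where ef: "eigenfun V E \<sigma> lam f" using assms(5) by (auto simp: eigenvalue_def)
  have exf: "\<exists>x\<in>V. f x \<noteq> 0" and eigf: "\<And>z. z \<in> V \<Longrightarrow> - slap V E \<sigma> f z = lam * f z"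
    using ef by (auto simp: eigenfun_def)
  obtain x0 g where x0: "x0 \<in> V" and g0: "g x0 = 1" and bnd: "\<forall>x\<in>V. \<bar>g x\<bar> \<le> 1"
      and eig: "\<forall>z\<in>V. slap V E \<sigma> g z = - lam * g z"
    using normalize[OF sg exf eigf] by blast
  have lp: "lam > 0" and dp: "deg V E x0 > 0"
    using lam_pos[of V E \<sigma> x0 g lam, OF sg sgn x0 g0 _ _ ln] bnd eig by auto
  obtain x y where xy: "E x y" "\<sigma> x y * g x * g y \<le> 0"
    using bad_edge[where g=g and lam=lam, OF sg sgn x0 g0 _ lp dp] eig by blast
  obtain a b where ab: "E a b" "\<sigma> a b * g a * g b \<le> 0" "gdist V E x0 a \<le> gdist V E x0 b"
  proof (cases "gdist V E x0 x \<le> gdist V E x0 y")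
    case True then show ?thesis using that xy by blast
  next
    case False
    have "E y x" using xy sg by (auto simp: simple_graph_def)
    moreover have "\<sigma> y x = \<sigma> x y" using xy(1) sgn unfolding is_sign_def by metis
    then have "\<sigma> y x * g y * g x \<le> 0" using xy by (simp add: algebra_simps)
    ultimately show ?thesis using that False by simp
  qed
  have P1: "1 / (4 * real (max_deg V E) * (2 * lam - K))
     \<le> real (diameter V E + 1) * real_of_int \<lceil>real (diameter V E + 1) / 2\<rceil>"
    by (rule part1[where g=g and lam=lam, OF sg cn sgn cd x0 _ _ lp True g0 ab]) (use bnd eig in auto)
  have P2: "1 / (4 * real (max_deg V E) * (2 * lam - K))
     \<le> real (diameter V E) * real_of_int \<lceil>real (diameter V E) / 2\<rceil>"
    if hyp: "\<not> simple_eigenvalue V E \<sigma> lam \<or> balanced V E \<sigma>"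
  proof (cases "balanced V E \<sigma>")
    case True
    show ?thesis
      by (rule part2_bal[where g=g and lam=lam, OF sg cn sgn cd True x0 _ _ lp \<open>2 * lam - K > 0\<close> g0 ab(1,2)]) (use bnd eig in auto)
  next
    case False
    then have ns: "\<not> simple_eigenvalue V E \<sigma> lam" using hyp by simp
    then obtain f1 f2 where f1: "eigenfun V E \<sigma> lam f1" and f2: "eigenfun V E \<sigma> lam f2"
      and np: "\<not> (\<exists>c. \<forall>x\<in>V. f1 x = c * f2 x)"
      using assms(5) unfolding simple_eigenvalue_def by blast
    obtain v where v: "v \<in> V" "f2 v \<noteq> 0" using f2 by (auto simp: eigenfun_def)
    define c where "c = - (f1 v / f2 v)"
    define h where "h = (\<lambda>z. 1 * f1 z + c * f2 z)"
    have hv: "h v = 0" using v by (simp add: h_def c_def)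
    have eigh: "\<And>z. z \<in> V \<Longrightarrow> - slap V E \<sigma> h z = lam * h z"
    proof -
      fix z assume z: "z \<in> V"
      have "slap V E \<sigma> h z = 1 * slap V E \<sigma> f1 z + c * slap V E \<sigma> f2 z"
        unfolding h_def by (rule slap_lin)
      moreover have "slap V E \<sigma> f1 z = - lam * f1 z" "slap V E \<sigma> f2 z = - lam * f2 z"
        using f1 f2 z by (auto simp: eigenfun_def)
      ultimately have "slap V E \<sigma> h z = - lam * f1 z + c * (- lam * f2 z)" by simp
      then show "- slap V E \<sigma> h z = lam * h z" unfolding h_def by (simp add: algebra_simps)
    qed
    have exh: "\<exists>x\<in>V. h x \<noteq> 0"
    proof (rule ccontr)
      assume "\<not> (\<exists>x\<in>V. h x \<noteq> 0)"
      then have "\<forall>x\<in>V. f1 x = (f1 v / f2 v) * f2 x" by (auto simp: h_def c_def)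
      then show False using np by blast
    qed
    obtain x1 g' where x1: "x1 \<in> V" and g1: "g' x1 = 1" and bnd': "\<forall>x\<in>V. \<bar>g' x\<bar> \<le> 1"
      and eig': "\<forall>z\<in>V. slap V E \<sigma> g' z = - lam * g' z" and z': "\<forall>z. h z = 0 \<longrightarrow> g' z = 0"
      using normalize[OF sg exh eigh] by blast
    have gv: "g' v = 0" using z' hv by simp
    obtain P where P: "walk V E P" "hd P = x1" "last P = v" "nobt P" "length P = Suc (gdist V E x1 v)"
       "gdist V E x1 v \<le> diameter V E"
      using shortest_from[OF sg cn x1 v(1)] by blast
    show ?thesis
      by (rule use_path[where g=g' and lam=lam, OF sg sgn cd x1 _ _ lp \<open>2 * lam - K > 0\<close> g1 P(1) P(2) P(4)])
         (use bnd' eig' P gv in auto)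
  qed
  show ?thesis using P1 P2 by blast
qed

end
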